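(* Let $\Phi$ be a non-trivial root system generating a euclidean vector space $E$, let $W$ be its Weyl group, and let $S\subset E$ be a $W$-orbit satisfying: (a) $S$ generates $E$ as a vector space; (b) there are no distinct $\lambda_1,\dots,\lambda_4\in S$ with $\lambda_1+\lambda_2=\lambda_3+\lambda_4$. Then $\Phi$ is simple of type $A_\ell$ for some $\ell\ge1$. Moreover, if $\Phi=\{\pm(e_i-e_j)\mid 0\le i<j\le\ell\}\subset E=\mathbb{R}^{\ell+1}/\mathrm{diag}(\mathbb{R})$ (with $e_i$ the images of the standard basis vectors), and if either $\ell\ne2$ or additionally (c) there are no distinct $\lambda_1,\dots,\lambda_6\in S$ with $\lambda_1+\lambda_2+\lambda_3=\lambda_4+\lambda_5+\lambda_6$, then $S=\{ce_i\mid 0\le i\le\ell\}$ for some constant $c\ne0$. *)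

theory Defs
  imports "HOL-Analysis.Analysis"
begin

definition refl_vec :: "'a::real_inner \<Rightarrow> 'a \<Rightarrow> 'a" where
  "refl_vec \<alpha> v = v - (2 * (v \<bullet> \<alpha>) / (\<alpha> \<bullet> \<alpha>)) *\<^sub>R \<alpha>"

definition root_system :: "'a::euclidean_space set \<Rightarrow> bool" where
  "root_system \<Phi> \<longleftrightarrow>
     finite \<Phi> \<and> 0 \<notin> \<Phi> \<and> span \<Phi> = UNIV \<and>
     (\<forall>\<alpha>\<in>\<Phi>. \<forall>c::real. c *\<^sub>R \<alpha> \<in> \<Phi> \<longrightarrow> c = 1 \<or> c = -1) \<and>
     (\<forall>\<alpha>\<in>\<Phi>. refl_vec \<alpha> ` \<Phi> \<subseteq> \<Phi>) \<and>
     (\<forall>\<alpha>\<in>\<Phi>. \<forall>\<beta>\<in>\<Phi>. 2 * (\<beta> \<bullet> \<alpha>) / (\<alpha> \<bullet> \<alpha>) \<in> \<int>)"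

text \<open>Weyl group: the group generated by the reflections s_alpha, alpha in Phi
  (reflections are involutions, so the monoid they generate is the group).\<close>
inductive_set weyl_group :: "'a::real_inner set \<Rightarrow> ('a \<Rightarrow> 'a) set" for \<Phi> where
  weyl_id: "id \<in> weyl_group \<Phi>"
| weyl_step: "w \<in> weyl_group \<Phi> \<Longrightarrow> \<alpha> \<in> \<Phi> \<Longrightarrow> refl_vec \<alpha> \<circ> w \<in> weyl_group \<Phi>"

definition weyl_orbit :: "'a::real_inner set \<Rightarrow> 'a set \<Rightarrow> bool" where
  "weyl_orbit \<Phi> S \<longleftrightarrow> (\<exists>x. S = (\<lambda>w. w x) ` weyl_group \<Phi>)"

text \<open>The standard root system of type A_l inside R^(l+1)/diag(R), transported
  along a linear isomorphism: e 0, ..., e l are the images in E of the standard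
  basis vectors under a linear surjection R^(l+1) \<rightarrow> E whose kernel is diag(R).\<close>
definition quotient_basis :: "nat \<Rightarrow> (nat \<Rightarrow> 'a::real_vector) \<Rightarrow> bool" where
  "quotient_basis l e \<longleftrightarrow>
     span (e ` {0..l}) = UNIV \<and>
     (\<forall>c::nat \<Rightarrow> real. (\<Sum>i\<le>l. c i *\<^sub>R e i) = 0 \<longleftrightarrow> (\<forall>i\<le>l. c i = c 0))"

definition A_roots :: "nat \<Rightarrow> (nat \<Rightarrow> 'a::real_vector) \<Rightarrow> 'a set" where
  "A_roots l e = {e i - e j | i j. i \<le> l \<and> j \<le> l \<and> i \<noteq> j}"

definition type_A :: "nat \<Rightarrow> 'a::real_vector set \<Rightarrow> bool" where
  "type_A l \<Phi> \<longleftrightarrow> (\<exists>e. quotient_basis l e \<and> \<Phi> = A_roots l e)"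

text \<open>E is isometrically identified with R^(l+1)/diag(R) (quotient inner product),
  e i being the image of the i-th standard basis vector.\<close>
definition isometric_quotient_basis :: "nat \<Rightarrow> (nat \<Rightarrow> 'a::real_inner) \<Rightarrow> bool" where
  "isometric_quotient_basis l e \<longleftrightarrow>
     quotient_basis l e \<and>
     (\<forall>i\<le>l. \<forall>j\<le>l. e i \<bullet> e j = (if i = j then 1 else 0) - 1 / (real l + 1))"

end

theory Submission
  imports Defs
begin


lemma refl_vec_zero[simp]: "refl_vec a 0 = 0"
  by (simp add: refl_vec_def)

lemma refl_vec_self: "a \<noteq> 0 \<Longrightarrow> refl_vec a a = - a"
  by (simp add: refl_vec_def scaleR_2)

lemma linear_refl_vec: "linear (refl_vec a)"
  unfolding refl_vec_def
  by (intro linearI) (auto simp: algebra_simps inner_add_left add_divide_distrib)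

lemma refl_vec_inner: "a \<noteq> 0 \<Longrightarrow> refl_vec a u \<bullet> refl_vec a v = u \<bullet> v"
  unfolding refl_vec_def
  by (simp add: inner_diff_left inner_diff_right inner_commute field_simps power2_eq_square)

lemma refl_vec_invol: "a \<noteq> 0 \<Longrightarrow> refl_vec a (refl_vec a v) = v"
  unfolding refl_vec_def
  by (simp add: inner_diff_left algebra_simps)

lemma refl_vec_a:
  assumes "a \<noteq> 0" "b \<noteq> 0"
  shows "refl_vec a (x *\<^sub>R a + y *\<^sub>R b) =
     (- x - (2*(b \<bullet> a)/(a \<bullet> a)) * y) *\<^sub>R a + y *\<^sub>R b"
proof -
  have "2 * ((x *\<^sub>R a + y *\<^sub>R b) \<bullet> a) / (a \<bullet> a) = 2*x + (2*(b \<bullet> a)/(a \<bullet> a)) * y"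
    using assms by (simp add: inner_add_left field_simps)
  then show ?thesis unfolding refl_vec_def
    apply (simp add: algebra_simps)
    apply (simp add: scaleR_left_distrib[symmetric])
    done
qed

lemma refl_vec_b:
  assumes "a \<noteq> 0" "b \<noteq> 0"
  shows "refl_vec b (x *\<^sub>R a + y *\<^sub>R b) =
     x *\<^sub>R a + (- y - (2*(a \<bullet> b)/(b \<bullet> b)) * x) *\<^sub>R b"
proof -
  have "2 * ((x *\<^sub>R a + y *\<^sub>R b) \<bullet> b) / (b \<bullet> b) = 2*y + (2*(a \<bullet> b)/(b \<bullet> b)) * x"
    using assms by (simp add: inner_add_left field_simps)
  then show ?thesis unfolding refl_vec_def
    apply (simp add: algebra_simps)
    apply (simp add: scaleR_left_distrib[symmetric])
    done
qed

definition no4 :: "'a::real_vector set \<Rightarrow> bool" where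
  "no4 S \<longleftrightarrow> \<not> (\<exists>l1\<in>S. \<exists>l2\<in>S. \<exists>l3\<in>S. \<exists>l4\<in>S.
                  distinct [l1, l2, l3, l4] \<and> l1 + l2 = l3 + l4)"

lemma four_pt:
  fixes S :: "'a::real_inner set"
  assumes n4: "no4 S" and mu: "\<mu> \<in> S" and a0: "\<alpha> \<noteq> 0"
    and cl: "refl_vec \<alpha> \<mu> \<in> S"
    and ma: "\<mu> \<bullet> \<alpha> \<noteq> 0" and lin: "linear r" and rS: "\<forall>v\<in>S. r v \<in> S"
    and ra: "r \<alpha> = - \<alpha>" and np: "\<forall>t. \<mu> - r \<mu> \<noteq> t *\<^sub>R \<alpha>"
  shows False
proof -
  define a where "a = 2 * (\<mu> \<bullet> \<alpha>) / (\<alpha> \<bullet> \<alpha>)"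
  have an: "a \<noteq> 0" using a0 ma by (simp add: a_def)
  define \<nu> where "\<nu> = refl_vec \<alpha> \<mu>"
  have nu: "\<nu> = \<mu> - a *\<^sub>R \<alpha>" by (simp add: \<nu>_def a_def refl_vec_def)
  have rnu: "r \<nu> = r \<mu> + a *\<^sub>R \<alpha>"
    using lin ra by (simp add: nu linear_diff linear_scale)
  have S: "\<nu> \<in> S" "r \<mu> \<in> S" "r \<nu> \<in> S" using cl mu rS \<nu>_def by auto
  have aa: "a *\<^sub>R \<alpha> \<noteq> 0" using an a0 by simp
  have d1: "\<mu> \<noteq> r \<mu>" using np[rule_format, of 0] by auto
  have d2: "\<mu> \<noteq> \<nu>" using aa nu by auto
  have d3: "\<mu> \<noteq> r \<nu>" using np[rule_format, of a] rnu by (auto simp: algebra_simps)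
  have d4: "r \<mu> \<noteq> \<nu>" using np[rule_format, of a] nu by (auto simp: algebra_simps)
  have d5: "r \<mu> \<noteq> r \<nu>" using aa rnu by auto
  have d6: "\<nu> \<noteq> r \<nu>"
  proof
    assume "\<nu> = r \<nu>"
    then have e: "\<mu> - a *\<^sub>R \<alpha> = r \<mu> + a *\<^sub>R \<alpha>" using nu rnu by simp
    have t: "(2*a) *\<^sub>R \<alpha> = a *\<^sub>R \<alpha> + a *\<^sub>R \<alpha>" by (metis mult_2 scaleR_left_distrib)
    have "\<mu> - r \<mu> = (\<mu> - a *\<^sub>R \<alpha>) + a *\<^sub>R \<alpha> - r \<mu>" by simp
    also have "\<dots> = (2*a) *\<^sub>R \<alpha>" unfolding e t by simp
    finally have "\<mu> - r \<mu> = (2*a) *\<^sub>R \<alpha>" .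
    then show False using np by blast
  qed
  have "\<mu> + r \<mu> = \<nu> + r \<nu>" using nu rnu by simp
  moreover have "distinct [\<mu>, r \<mu>, \<nu>, r \<nu>]" using d1 d2 d3 d4 d5 d6 by simp
  ultimately have h: "distinct [\<mu>, r \<mu>, \<nu>, r \<nu>] \<and> \<mu> + r \<mu> = \<nu> + r \<nu>" by blast
  show False using n4 unfolding no4_def
    apply (elim notE)
    apply (rule bexI[OF _ mu])
    apply (rule bexI[OF _ S(2)])
    apply (rule bexI[OF _ S(1)])
    apply (rule bexI[OF _ S(3)])
    by (rule h)
qed

lemma roots_nz: "root_system \<Phi> \<Longrightarrow> \<alpha> \<in> \<Phi> \<Longrightarrow> \<alpha> \<noteq> 0"
  unfolding root_system_def by auto

lemma roots_neg: "root_system \<Phi> \<Longrightarrow> \<alpha> \<in> \<Phi> \<Longrightarrow> - \<alpha> \<in> \<Phi>"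
  using refl_vec_self[of \<alpha>] roots_nz[of \<Phi> \<alpha>] unfolding root_system_def
  by (metis image_subset_iff)

lemma roots_refl: "root_system \<Phi> \<Longrightarrow> \<alpha> \<in> \<Phi> \<Longrightarrow> \<beta> \<in> \<Phi> \<Longrightarrow> refl_vec \<alpha> \<beta> \<in> \<Phi>"
  unfolding root_system_def by (auto simp: image_subset_iff)

lemma roots_int: "root_system \<Phi> \<Longrightarrow> \<alpha> \<in> \<Phi> \<Longrightarrow> \<beta> \<in> \<Phi> \<Longrightarrow> 2 * (\<beta> \<bullet> \<alpha>) / (\<alpha> \<bullet> \<alpha>) \<in> \<int>"
  unfolding root_system_def by auto

lemma indep2:
  assumes root: "root_system \<Phi>" and ab: "\<alpha> \<in> \<Phi>" "\<beta> \<in> \<Phi>" "\<beta> \<noteq> \<alpha>" "\<beta> \<noteq> - \<alpha>"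
  shows "\<forall>s t. s *\<^sub>R \<alpha> + t *\<^sub>R \<beta> = 0 \<longrightarrow> s = 0 \<and> t = 0"
proof (intro allI impI)
  fix s t assume st: "s *\<^sub>R \<alpha> + t *\<^sub>R \<beta> = 0"
  have a0: "\<alpha> \<noteq> 0" using roots_nz[OF root ab(1)] .
  show "s = 0 \<and> t = 0"
  proof (cases "t = 0")
    case True then show ?thesis using st a0 by simp
  next
    case False
    have tb: "t *\<^sub>R \<beta> = - (s *\<^sub>R \<alpha>)" using st by (simp add: eq_neg_iff_add_eq_0 add.commute)
    have "\<beta> = (1/t) *\<^sub>R (t *\<^sub>R \<beta>)" using False by simp
    also have "\<dots> = (- s / t) *\<^sub>R \<alpha>" unfolding tb by simp
    finally have bb: "\<beta> = (- s / t) *\<^sub>R \<alpha>" .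
    then have "- s / t = 1 \<or> - s / t = -1" using root ab unfolding root_system_def by metis
    then show ?thesis using bb ab by auto
  qed
qed

lemma cs_strict:
  fixes \<alpha> \<beta> :: "'a::real_inner"
  assumes ind: "\<forall>s t. s *\<^sub>R \<alpha> + t *\<^sub>R \<beta> = 0 \<longrightarrow> s = 0 \<and> t = 0" and b0: "\<beta> \<noteq> 0"
  shows "(\<alpha> \<bullet> \<beta>)^2 < (\<alpha> \<bullet> \<alpha>) * (\<beta> \<bullet> \<beta>)"
proof -
  define v where "v = (\<beta> \<bullet> \<beta>) *\<^sub>R \<alpha> + (- (\<alpha> \<bullet> \<beta>)) *\<^sub>R \<beta>"
  have bb: "\<beta> \<bullet> \<beta> > 0" using b0 by simp
  have "v \<noteq> 0" using ind bb unfolding v_def by fastforce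
  then have "v \<bullet> v > 0" by simp
  moreover have "v \<bullet> v = (\<beta> \<bullet> \<beta>) * ((\<alpha> \<bullet> \<alpha>) * (\<beta> \<bullet> \<beta>) - (\<alpha> \<bullet> \<beta>)^2)"
    unfolding v_def by (simp add: inner_add_left inner_add_right inner_commute algebra_simps power2_eq_square)
  ultimately have "0 < (\<beta> \<bullet> \<beta>) * ((\<alpha> \<bullet> \<alpha>) * (\<beta> \<bullet> \<beta>) - (\<alpha> \<bullet> \<beta>)^2)"
    by simp
  from zero_less_mult_pos[OF this bb]
  have "0 < (\<alpha> \<bullet> \<alpha>) * (\<beta> \<bullet> \<beta>) - (\<alpha> \<bullet> \<beta>)^2" .
  then show ?thesis by linarith
qed

definition good :: "'a::real_inner set \<Rightarrow> ('a \<Rightarrow> 'a) \<Rightarrow> bool" where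
  "good S r \<longleftrightarrow> linear r \<and> (\<forall>v\<in>S. r v \<in> S) \<and> (\<forall>u v. r u \<bullet> r v = u \<bullet> v)"

lemma good_comp: "good S f \<Longrightarrow> good S g \<Longrightarrow> good S (f \<circ> g)"
  unfolding good_def by (auto intro: linear_compose)

lemma good_refl: "a \<noteq> 0 \<Longrightarrow> \<forall>v\<in>S. refl_vec a v \<in> S \<Longrightarrow> good S (refl_vec a)"
  unfolding good_def using linear_refl_vec refl_vec_inner by blast

lemma r_contra:
  fixes S :: "'a::real_inner set"
  assumes n4: "no4 S" and mu: "\<mu> \<in> S" and a0: "\<alpha> \<noteq> 0" and b0: "\<beta> \<noteq> 0"
    and cla: "refl_vec \<alpha> \<mu> \<in> S" and clb: "refl_vec \<beta> \<mu> \<in> S"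
    and ma: "\<mu> \<bullet> \<alpha> \<noteq> 0" and mb: "\<mu> \<bullet> \<beta> \<noteq> 0" and g: "good S r"
    and ra: "r \<alpha> = - \<alpha>" and rb: "r \<beta> = - \<beta>"
    and ind: "\<forall>s t. s *\<^sub>R \<alpha> + t *\<^sub>R \<beta> = 0 \<longrightarrow> s = 0 \<and> t = 0"
  shows False
proof -
  have lin: "linear r" and rS: "\<forall>v\<in>S. r v \<in> S" and ri: "\<And>u v. r u \<bullet> r v = u \<bullet> v"
    using g unfolding good_def by auto
  have "r \<mu> \<bullet> \<alpha> = - (\<mu> \<bullet> \<alpha>)" using ri[of \<mu> \<alpha>] ra by simp
  then have d0: "\<mu> - r \<mu> \<noteq> 0" using ma by auto
  show False
  proof (cases "\<exists>t. \<mu> - r \<mu> = t *\<^sub>R \<alpha>")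
    case False
    then show False using four_pt[OF n4 mu a0 cla ma lin rS ra] by blast
  next
    case True
    then obtain t where t: "\<mu> - r \<mu> = t *\<^sub>R \<alpha>" by blast
    have "\<forall>s. \<mu> - r \<mu> \<noteq> s *\<^sub>R \<beta>"
    proof (intro allI notI)
      fix s assume "\<mu> - r \<mu> = s *\<^sub>R \<beta>"
      then have "t *\<^sub>R \<alpha> + (-s) *\<^sub>R \<beta> = 0" using t by simp
      then have "t = 0" using ind by blast
      then show False using t d0 by simp
    qed
    then show False using four_pt[OF n4 mu b0 clb mb lin rS rb] by blast
  qed
qed

lemma T_coord:
  assumes "a \<noteq> 0" "b \<noteq> 0"
  shows "refl_vec a (refl_vec b (x *\<^sub>R a + y *\<^sub>R b)) =
    ((2*(a \<bullet> b)/(b \<bullet> b) * (2*(b \<bullet> a)/(a \<bullet> a)) - 1) * x + (2*(b \<bullet> a)/(a \<bullet> a)) * y) *\<^sub>R a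
    + (- (2*(a \<bullet> b)/(b \<bullet> b)) * x - y) *\<^sub>R b"
  unfolding refl_vec_b[OF assms] refl_vec_a[OF assms] by (simp add: algebra_simps)

lemma stepB:
  fixes \<Phi> S :: "'a::euclidean_space set"
  assumes root: "root_system \<Phi>" and n4: "no4 S"
    and cl: "\<forall>\<gamma>\<in>\<Phi>. \<forall>\<nu>\<in>S. refl_vec \<gamma> \<nu> \<in> S" and mu: "\<mu> \<in> S"
    and ab: "\<alpha> \<in> \<Phi>" "\<beta> \<in> \<Phi>" "\<beta> \<noteq> \<alpha>" "\<beta> \<noteq> - \<alpha>"
    and ma: "\<mu> \<bullet> \<alpha> \<noteq> 0" and mb: "\<mu> \<bullet> \<beta> \<noteq> 0"
  shows "\<beta> \<bullet> \<beta> = \<alpha> \<bullet> \<alpha> \<and> (2 * (\<alpha> \<bullet> \<beta>) = \<alpha> \<bullet> \<alpha> \<or> 2 * (\<alpha> \<bullet> \<beta>) = - (\<alpha> \<bullet> \<alpha>))"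
proof -
  have a0: "\<alpha> \<noteq> 0" and b0: "\<beta> \<noteq> 0" using roots_nz[OF root] ab by auto
  have aa: "\<alpha> \<bullet> \<alpha> > 0" and bb: "\<beta> \<bullet> \<beta> > 0" using a0 b0 by auto
  have ind: "\<forall>s t. s *\<^sub>R \<alpha> + t *\<^sub>R \<beta> = 0 \<longrightarrow> s = 0 \<and> t = 0"
    using indep2[OF root ab] .
  define p where "p = 2*(\<alpha> \<bullet> \<beta>)/(\<beta> \<bullet> \<beta>)"
  define q where "q = 2*(\<beta> \<bullet> \<alpha>)/(\<alpha> \<bullet> \<alpha>)"
  have "p \<in> \<int>" unfolding p_def using roots_int[OF root ab(2) ab(1)] .
  then obtain P where P: "p = of_int P" by (auto elim: Ints_cases)
  have "q \<in> \<int>" unfolding q_def using roots_int[OF root ab(1) ab(2)] .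
  then obtain Q where Q: "q = of_int Q" by (auto elim: Ints_cases)
  have pq: "p * q = 4 * (\<alpha> \<bullet> \<beta>)^2 / ((\<alpha> \<bullet> \<alpha>) * (\<beta> \<bullet> \<beta>))"
    unfolding p_def q_def by (simp add: inner_commute power2_eq_square field_simps)
  have cs: "(\<alpha> \<bullet> \<beta>)^2 < (\<alpha> \<bullet> \<alpha>) * (\<beta> \<bullet> \<beta>)" using cs_strict[OF ind b0] .
  have "p * q < 4" unfolding pq using cs aa bb by (simp add: divide_less_eq)
  moreover have "p * q \<ge> 0" unfolding pq using aa bb by simp
  ultimately have PQ: "P * Q < 4" "P * Q \<ge> 0" unfolding P Q
    by (simp_all flip: of_int_mult)
  have P0: "P = 0 \<longleftrightarrow> Q = 0"
  proof -
    have "p = 0 \<longleftrightarrow> \<alpha> \<bullet> \<beta> = 0" unfolding p_def using bb by simp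
    moreover have "q = 0 \<longleftrightarrow> \<alpha> \<bullet> \<beta> = 0" unfolding q_def using aa by (simp add: inner_commute)
    ultimately show ?thesis using P Q by simp
  qed
  define T where "T = refl_vec \<alpha> \<circ> refl_vec \<beta>"
  have gT: "good S T" unfolding T_def
    using good_comp good_refl a0 b0 cl ab by metis
  have Tc: "\<And>x y. T (x *\<^sub>R \<alpha> + y *\<^sub>R \<beta>) = ((p*q - 1) * x + q * y) *\<^sub>R \<alpha> + (- p * x - y) *\<^sub>R \<beta>"
    unfolding T_def o_def p_def q_def using T_coord[OF a0 b0] by simp
  have Ta: "T \<alpha> = (p*q - 1) *\<^sub>R \<alpha> + (- p) *\<^sub>R \<beta>" using Tc[of 1 0] by simp
  have Tb: "T \<beta> = q *\<^sub>R \<alpha> + (-1) *\<^sub>R \<beta>" using Tc[of 0 1] by simp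
  have cla: "refl_vec \<alpha> \<mu> \<in> S" and clb: "refl_vec \<beta> \<mu> \<in> S" using cl ab mu by auto
  have cases: "P * Q = 0 \<or> P * Q = 1 \<or> P * Q = 2 \<or> P * Q = 3" using PQ by linarith
  consider "P * Q = 0" | "P * Q = 1" | "P * Q = 2" | "P * Q = 3" using cases by blast
  then show ?thesis
  proof cases
    case 1
    then have "p = 0" "q = 0" using P0 P Q by auto
    then have "T \<alpha> = - \<alpha>" "T \<beta> = - \<beta>" using Ta Tb by simp_all
    then show ?thesis using r_contra[OF n4 mu a0 b0 cla clb ma mb gT _ _ ind] by blast
  next
    case 2
    then have "(P = 1 \<and> Q = 1) \<or> (P = -1 \<and> Q = -1)" by (simp add: zmult_eq_1_iff)
    then have "(p = 1 \<and> q = 1) \<or> (p = -1 \<and> q = -1)" using P Q by auto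
    then show ?thesis unfolding p_def q_def using aa bb
      by (auto simp: field_simps inner_commute)
  next
    case 3
    then have pq2: "p * q = 2" "q * p = 2" using P Q by (simp_all flip: of_int_mult add: mult.commute)
    have "T (T \<alpha>) = - \<alpha>" unfolding Ta Tc using pq2 by (simp add: algebra_simps)
    moreover have "T (T \<beta>) = - \<beta>" unfolding Tb Tc using pq2 by (simp add: algebra_simps)
    ultimately show ?thesis
      using r_contra[OF n4 mu a0 b0 cla clb ma mb good_comp[OF gT gT] _ _ ind] by auto
  next
    case 4
    then have pq3: "p * q = 3" "q * p = 3" using P Q by (simp_all flip: of_int_mult add: mult.commute)
    have "T (T (T \<alpha>)) = - \<alpha>" unfolding Ta Tc using pq3 by (simp add: algebra_simps)
    moreover have "T (T (T \<beta>)) = - \<beta>" unfolding Tb Tc using pq3 by (simp add: algebra_simps)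
    ultimately show ?thesis
      using r_contra[OF n4 mu a0 b0 cla clb ma mb good_comp[OF gT good_comp[OF gT gT]] _ _ ind] by auto
  qed
qed

lemma weyl_zero: "w \<in> weyl_group \<Phi> \<Longrightarrow> w 0 = 0"
  by (induction rule: weyl_group.induct) auto

lemma orbit_closed:
  assumes "S = (\<lambda>w. w x) ` weyl_group \<Phi>" "\<gamma> \<in> \<Phi>" "\<nu> \<in> S"
  shows "refl_vec \<gamma> \<nu> \<in> S"
proof -
  obtain w where w: "w \<in> weyl_group \<Phi>" "\<nu> = w x" using assms by auto
  have "refl_vec \<gamma> \<circ> w \<in> weyl_group \<Phi>" using w assms by (intro weyl_step)
  then have "(refl_vec \<gamma> \<circ> w) x \<in> S" using assms(1) by blast
  then show ?thesis using w by simp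
qed

lemma irr:
  fixes \<Phi> S :: "'a::euclidean_space set"
  assumes root: "root_system \<Phi>" and S: "S = (\<lambda>w. w x) ` weyl_group \<Phi>"
    and gen: "span S = UNIV" and sub: "\<Phi>2 \<subseteq> \<Phi>" and x2: "\<forall>\<gamma>\<in>\<Phi>2. x \<bullet> \<gamma> = 0"
    and orth: "\<forall>\<gamma>\<in>\<Phi>. \<gamma> \<notin> \<Phi>2 \<longrightarrow> (\<forall>\<delta>\<in>\<Phi>2. \<gamma> \<bullet> \<delta> = 0)"
  shows "\<Phi>2 = {}"
proof -
  have W: "\<forall>\<delta>\<in>\<Phi>2. w x \<bullet> \<delta> = 0" if "w \<in> weyl_group \<Phi>" for w
    using that
  proof (induction rule: weyl_group.induct)
    case weyl_id then show ?case using x2 by simp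
  next
    case (weyl_step w \<alpha>)
    show ?case
    proof
      fix \<delta> assume d: "\<delta> \<in> \<Phi>2"
      have "(refl_vec \<alpha> \<circ> w) x \<bullet> \<delta> = w x \<bullet> \<delta> - (2 * (w x \<bullet> \<alpha>) / (\<alpha> \<bullet> \<alpha>)) * (\<alpha> \<bullet> \<delta>)"
        by (simp add: refl_vec_def inner_diff_left)
      also have "\<dots> = 0"
      proof (cases "\<alpha> \<in> \<Phi>2")
        case True then show ?thesis using weyl_step.IH d by simp
      next
        case False then show ?thesis using weyl_step.IH d orth weyl_step.hyps by simp
      qed
      finally show "(refl_vec \<alpha> \<circ> w) x \<bullet> \<delta> = 0" .
    qed
  qed
  show ?thesis
  proof (rule ccontr)
    assume "\<Phi>2 \<noteq> {}"
    then obtain \<delta> where d: "\<delta> \<in> \<Phi>2" by auto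
    have "\<And>y. y \<in> S \<Longrightarrow> orthogonal \<delta> y" using W d S unfolding orthogonal_def
      by (auto simp: inner_commute)
    then have "orthogonal \<delta> \<delta>" using orthogonal_to_span[of \<delta> S \<delta>] gen by auto
    then have "\<delta> = 0" unfolding orthogonal_def by simp
    then show False using roots_nz[OF root] d sub by auto
  qed
qed

lemma indep_idx:
  fixes f :: "nat \<Rightarrow> 'a::real_inner"
  assumes inj: "inj_on f I" and fin: "finite I" and N: "N > 0"
    and nf: "\<forall>j\<in>I. f j \<bullet> f j = N" and pf: "\<forall>j\<in>I. \<forall>k\<in>I. j \<noteq> k \<longrightarrow> 2 * (f j \<bullet> f k) = N"
    and z: "(\<Sum>j\<in>I. d j *\<^sub>R f j) = 0"
  shows "\<forall>j\<in>I. d j = 0"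
proof -
  define D where "D = (\<Sum>j\<in>I. d j)"
  have key: "d k = - D" if k: "k \<in> I" for k
  proof -
    have ip: "\<forall>j\<in>I. f j \<bullet> f k = N/2 + (if j = k then N/2 else 0)"
      using nf pf k by (auto simp: field_simps)
    have "0 = (\<Sum>j\<in>I. d j *\<^sub>R f j) \<bullet> f k" using z by simp
    also have "\<dots> = (\<Sum>j\<in>I. d j * (f j \<bullet> f k))" by (simp add: inner_sum_left)
    also have "\<dots> = (\<Sum>j\<in>I. d j * (N/2) + (if j = k then d j * (N/2) else 0))"
      using ip by (intro sum.cong) (auto simp: algebra_simps)
    also have "\<dots> = (N/2) * D + d k * (N/2)"
      using fin k by (simp add: sum.distrib D_def sum_distrib_right sum_distrib_left mult.commute)
    finally have "0 = (N/2) * (D + d k)" by (simp add: algebra_simps)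
    then show ?thesis using N by simp
  qed
  have "D = (\<Sum>j\<in>I. - D)" unfolding D_def[symmetric] unfolding D_def
    using key by (metis (no_types, lifting) D_def sum.cong)
  then have "D = - real (card I) * D" by simp
  then have "(1 + real (card I)) * D = 0" by (simp add: algebra_simps)
  then have "D = 0" by (simp add: add_nonneg_eq_0_iff)
  then show ?thesis using key by simp
qed

lemma atMost_split0: "{..(l::nat)} = insert 0 {1..l}"
  by auto

lemma G:
  fixes \<Phi> \<Psi> :: "'a::euclidean_space set"
  assumes fin: "finite \<Psi>" and N: "N > 0"
    and nrm: "\<forall>a\<in>\<Psi>. a \<bullet> a = N" and pair: "\<forall>a\<in>\<Psi>. \<forall>b\<in>\<Psi>. a \<noteq> b \<longrightarrow> 2 * (a \<bullet> b) = N"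
    and Phi: "\<Phi> = \<Psi> \<union> uminus ` \<Psi> \<union> {a - b | a b. a \<in> \<Psi> \<and> b \<in> \<Psi> \<and> a \<noteq> b}"
    and sp: "span \<Phi> = UNIV"
  shows "type_A (card \<Psi>) \<Phi>"
proof -
  define l where "l = card \<Psi>"
  obtain f where f: "bij_betw f {1..l} \<Psi>" using ex_bij_betw_nat_finite_1[OF fin] l_def by auto
  have inj: "inj_on f {1..l}" and img: "f ` {1..l} = \<Psi>" using f by (auto simp: bij_betw_def)
  define e0 where "e0 = (1/(real l + 1)) *\<^sub>R (\<Sum>j\<in>{1..l}. f j)"
  define e where "e i = (if i = 0 then e0 else e0 - f i)" for i
  have sumf: "(\<Sum>i\<le>l. c i *\<^sub>R e i) = (\<Sum>i\<le>l. c i) *\<^sub>R e0 - (\<Sum>j\<in>{1..l}. c j *\<^sub>R f j)" for c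
  proof -
    have "(\<Sum>i\<le>l. c i *\<^sub>R e i) = c 0 *\<^sub>R e0 + (\<Sum>j\<in>{1..l}. c j *\<^sub>R e0 - c j *\<^sub>R f j)"
      unfolding atMost_split0 by (simp add: e_def scaleR_diff_right)
    also have "\<dots> = c 0 *\<^sub>R e0 + (\<Sum>j\<in>{1..l}. c j) *\<^sub>R e0 - (\<Sum>j\<in>{1..l}. c j *\<^sub>R f j)"
      by (simp add: sum_subtractf scaleR_sum_left)
    also have "\<dots> = (\<Sum>i\<le>l. c i) *\<^sub>R e0 - (\<Sum>j\<in>{1..l}. c j *\<^sub>R f j)"
      unfolding atMost_split0 by (simp add: scaleR_left_distrib)
    finally show ?thesis .
  qed
  have R: "(\<Sum>i\<le>l. c i *\<^sub>R e i) = (\<Sum>j\<in>{1..l}. ((\<Sum>i\<le>l. c i)/(real l + 1) - c j) *\<^sub>R f j)" for c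
    unfolding sumf e0_def by (simp add: scaleR_sum_right scaleR_diff_left sum_subtractf)
  have nf: "\<forall>j\<in>{1..l}. f j \<bullet> f j = N" using nrm img by auto
  have pf: "\<forall>j\<in>{1..l}. \<forall>k\<in>{1..l}. j \<noteq> k \<longrightarrow> 2 * (f j \<bullet> f k) = N"
    using pair img inj by (metis image_eqI inj_on_eq_iff)
  have AR: "A_roots l e = \<Phi>"
  proof
    show "A_roots l e \<subseteq> \<Phi>"
    proof
      fix v assume "v \<in> A_roots l e"
      then obtain i j where ij: "i \<le> l" "j \<le> l" "i \<noteq> j" "v = e i - e j" unfolding A_roots_def by auto
      show "v \<in> \<Phi>"
      proof (cases "i = 0")
        case True then show ?thesis using ij img unfolding Phi e_def by auto
      next
        case i: False
        show ?thesis
        proof (cases "j = 0")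
          case True then show ?thesis using ij img i unfolding Phi e_def by auto
        next
          case False
          then have "f j \<noteq> f i" using inj ij i by (auto simp: inj_on_eq_iff)
          moreover have "v = f j - f i" using ij i False unfolding e_def by simp
          moreover have "f j \<in> \<Psi>" "f i \<in> \<Psi>" using img ij i False by auto
          ultimately show ?thesis unfolding Phi by blast
        qed
      qed
    qed
  next
    show "\<Phi> \<subseteq> A_roots l e"
    proof
      fix v assume "v \<in> \<Phi>"
      then consider (a) "v \<in> \<Psi>" | (b) "v \<in> uminus ` \<Psi>" | (c) a b where "a \<in> \<Psi>" "b \<in> \<Psi>" "a \<noteq> b" "v = a - b"
        unfolding Phi by blast
      then show "v \<in> A_roots l e"
      proof cases
        case a
        then obtain j where j: "j \<in> {1..l}" "v = f j" using img by auto
        then have "v = e 0 - e j" unfolding e_def by simp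
        then show ?thesis unfolding A_roots_def using j by force
      next
        case b
        then obtain j where j: "j \<in> {1..l}" "v = - f j" using img by auto
        then have "v = e j - e 0" unfolding e_def by simp
        then show ?thesis unfolding A_roots_def using j by force
      next
        case c
        then obtain j k where j: "j \<in> {1..l}" "a = f j" "k \<in> {1..l}" "b = f k" using img by auto
        then have "j \<noteq> k" using c by auto
        moreover have "v = e k - e j" unfolding e_def using j c by simp
        ultimately show ?thesis unfolding A_roots_def using j by force
      qed
    qed
  qed
  have span_e: "span (e ` {0..l}) = UNIV"
  proof -
    have "\<Phi> \<subseteq> span (e ` {0..l})"
    proof
      fix v assume "v \<in> \<Phi>"
      then have "v \<in> A_roots l e" using AR by simp
      then obtain i j where ij: "i \<le> l" "j \<le> l" "v = e i - e j" unfolding A_roots_def by auto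
      then show "v \<in> span (e ` {0..l})" by (simp add: span_diff span_base)
    qed
    then have "span \<Phi> \<subseteq> span (e ` {0..l})" by (metis span_mono span_span)
    then show ?thesis using sp by (metis subset_UNIV subset_antisym)
  qed
  have rel: "(\<Sum>i\<le>l. c i *\<^sub>R e i) = 0 \<longleftrightarrow> (\<forall>i\<le>l. c i = c 0)" for c
  proof
    assume z: "(\<Sum>i\<le>l. c i *\<^sub>R e i) = 0"
    define C where "C = (\<Sum>i\<le>l. c i)"
    have "(\<Sum>j\<in>{1..l}. (C/(real l + 1) - c j) *\<^sub>R f j) = 0"
      using z R[of c] unfolding C_def by simp
    from indep_idx[OF inj finite_atLeastAtMost N nf pf this]
    have cj: "\<forall>j\<in>{1..l}. c j = C/(real l + 1)" by simp
    have "C = c 0 + (\<Sum>j\<in>{1..l}. c j)" unfolding C_def atMost_split0 by simp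
    also have "(\<Sum>j\<in>{1..l}. c j) = (\<Sum>j\<in>{1..l}. C/(real l + 1))"
      using cj by (intro sum.cong refl) blast
    also have "\<dots> = real l * (C/(real l + 1))" by simp
    finally have "c 0 = C/(real l + 1)" by (simp add: field_simps)
    show "\<forall>i\<le>l. c i = c 0"
    proof (intro allI impI)
      fix i assume "i \<le> l"
      show "c i = c 0"
      proof (cases "i = 0")
        case False
        then have "i \<in> {1..l}" using \<open>i \<le> l\<close> by auto
        then show ?thesis using cj \<open>c 0 = _\<close> by simp
      qed simp
    qed
  next
    assume all: "\<forall>i\<le>l. c i = c 0"
    have "(\<Sum>i\<le>l. c i) = (\<Sum>i\<le>l. c 0)" using all atMost_iff by (intro sum.cong refl) blast
    then have "(\<Sum>i\<le>l. c i) = (real l + 1) * c 0" by simp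
    moreover have "\<forall>j\<in>{1..l}. c j = c 0" using all atLeastAtMost_iff by blast
    ultimately have "\<forall>j\<in>{1..l}. (\<Sum>i\<le>l. c i)/(real l + 1) - c j = 0" by simp
    then show "(\<Sum>i\<le>l. c i *\<^sub>R e i) = 0" unfolding R by simp
  qed
  show ?thesis unfolding type_A_def l_def[symmetric] quotient_basis_def
    using span_e rel AR by blast
qed

lemma refl_vec_inner_expand: "x \<bullet> refl_vec d g = x \<bullet> g - (2 * (g \<bullet> d) / (d \<bullet> d)) * (x \<bullet> d)"
  by (simp add: refl_vec_def inner_diff_right)

lemma setup_orbit:
  fixes \<Phi> S :: "'a::euclidean_space set"
  assumes root: "root_system \<Phi>" and nontriv: "\<Phi> \<noteq> {}"
    and S: "S = (\<lambda>w. w x) ` weyl_group \<Phi>" and gen: "span S = UNIV"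
  shows "x \<in> S" "\<forall>\<gamma>\<in>\<Phi>. \<forall>\<nu>\<in>S. refl_vec \<gamma> \<nu> \<in> S" "\<exists>\<alpha>\<in>\<Phi>. x \<bullet> \<alpha> > 0"
proof -
  have "id x \<in> (\<lambda>w. w x) ` weyl_group \<Phi>" by (rule imageI) (rule weyl_id)
  then show xS: "x \<in> S" using S by simp
  show "\<forall>\<gamma>\<in>\<Phi>. \<forall>\<nu>\<in>S. refl_vec \<gamma> \<nu> \<in> S" using orbit_closed[OF S] by blast
  have "\<exists>\<alpha>\<in>\<Phi>. x \<bullet> \<alpha> \<noteq> 0"
  proof (rule ccontr)
    assume "\<not> ?thesis"
    then have "\<And>y. y \<in> \<Phi> \<Longrightarrow> orthogonal x y" unfolding orthogonal_def by auto
    then have "orthogonal x x" using orthogonal_to_span[of x \<Phi> x] root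
      unfolding root_system_def by auto
    then have x0: "x = 0" unfolding orthogonal_def by simp
    then have "S \<subseteq> {0}" using S weyl_zero by auto
    then have "span S \<subseteq> {0}" by (metis span_empty span_insert_0 span_mono)
    moreover obtain \<alpha> where "\<alpha> \<in> \<Phi>" using nontriv by auto
    ultimately show False using gen roots_nz[OF root \<open>\<alpha> \<in> \<Phi>\<close>] by auto
  qed
  then obtain \<alpha> where a: "\<alpha> \<in> \<Phi>" "x \<bullet> \<alpha> \<noteq> 0" by blast
  show "\<exists>\<alpha>\<in>\<Phi>. x \<bullet> \<alpha> > 0"
  proof (cases "x \<bullet> \<alpha> > 0")
    case True then show ?thesis using a by blast
  next
    case False
    then have "x \<bullet> (-\<alpha>) > 0" using a by simp
    then show ?thesis using roots_neg[OF root a(1)] by blast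
  qed
qed

lemma star_case:
  fixes \<Phi> S :: "'a::euclidean_space set"
  assumes root: "root_system \<Phi>" and S: "S = (\<lambda>w. w x) ` weyl_group \<Phi>" and gen: "span S = UNIV"
    and n4: "no4 S" and xS: "x \<in> S" and cl: "\<forall>\<gamma>\<in>\<Phi>. \<forall>\<nu>\<in>S. refl_vec \<gamma> \<nu> \<in> S"
    and Psi: "\<Psi> = {\<alpha>\<in>\<Phi>. x \<bullet> \<alpha> > 0}" and ne: "\<Psi> \<noteq> {}"
    and nonneg: "\<forall>a\<in>\<Psi>. \<forall>b\<in>\<Psi>. a \<bullet> b \<ge> 0"
  shows "\<exists>l\<ge>1. type_A l \<Phi>"
proof -
  have finP: "finite \<Phi>" using root unfolding root_system_def by auto
  have PsiP: "\<Psi> \<subseteq> \<Phi>" using Psi by auto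
  have fin: "finite \<Psi>" using finite_subset[OF PsiP finP] .
  obtain a0 where a0: "a0 \<in> \<Psi>" using ne by auto
  define N where "N = a0 \<bullet> a0"
  have N: "N > 0" using a0 roots_nz[OF root] PsiP unfolding N_def by auto
  have B: "b \<bullet> b = a \<bullet> a \<and> (2 * (a \<bullet> b) = a \<bullet> a \<or> 2 * (a \<bullet> b) = - (a \<bullet> a))"
    if "a \<in> \<Psi>" "b \<in> \<Psi>" "a \<noteq> b" for a b
  proof -
    have "b \<noteq> - a" using that Psi by auto
    then show ?thesis using stepB[OF root n4 cl xS, of a b] that Psi by auto
  qed
  have nrm: "\<forall>a\<in>\<Psi>. a \<bullet> a = N" using B a0 unfolding N_def by metis
  have pair: "\<forall>a\<in>\<Psi>. \<forall>b\<in>\<Psi>. a \<noteq> b \<longrightarrow> 2 * (a \<bullet> b) = N"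
  proof (intro ballI impI)
    fix a b assume ab: "a \<in> \<Psi>" "b \<in> \<Psi>" "a \<noteq> b"
    have "a \<bullet> b \<ge> 0" using nonneg ab by auto
    then show "2 * (a \<bullet> b) = N" using B[OF ab] nrm ab N by auto
  qed
  have rnz: "\<And>g. g \<in> \<Phi> \<Longrightarrow> g \<noteq> 0" using roots_nz[OF root] by auto
  define D where "D = {a - b | a b. a \<in> \<Psi> \<and> b \<in> \<Psi> \<and> a \<noteq> b}"
  have cls: "g \<in> \<Psi> \<union> uminus ` \<Psi> \<union> D" if g: "g \<in> \<Phi>" "\<exists>d\<in>\<Psi>. g \<bullet> d \<noteq> 0 \<or> x \<bullet> g \<noteq> 0" for g
  proof (cases "x \<bullet> g = 0")
    case False
    show ?thesis
    proof (cases "x \<bullet> g > 0")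
      case True then show ?thesis using g Psi by auto
    next
      case False
      then have "x \<bullet> (-g) > 0" using \<open>x \<bullet> g \<noteq> 0\<close> by simp
      then have "-g \<in> \<Psi>" using Psi roots_neg[OF root g(1)] by auto
      then have "g \<in> uminus ` \<Psi>" by (metis image_eqI minus_minus)
      then show ?thesis by auto
    qed
  next
    case x0: True
    then obtain d where d: "d \<in> \<Psi>" "g \<bullet> d \<noteq> 0" using g by auto
    have dP: "d \<in> \<Phi>" and dd: "d \<bullet> d = N" and xd: "x \<bullet> d > 0" using d Psi nrm by auto
    define \<eta> where "\<eta> = refl_vec d g"
    have eP: "\<eta> \<in> \<Phi>" unfolding \<eta>_def using roots_refl[OF root dP g(1)] .
    have xe: "x \<bullet> \<eta> = - (2 * (g \<bullet> d) / N) * (x \<bullet> d)"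
      unfolding \<eta>_def refl_vec_inner_expand x0 dd by simp
    have xe0: "x \<bullet> \<eta> \<noteq> 0" using xe d(2) xd N by simp
    have gi: "g = refl_vec d \<eta>" unfolding \<eta>_def using refl_vec_invol[OF rnz[OF dP]] by simp
    show ?thesis
    proof (cases "x \<bullet> \<eta> > 0")
      case True
      then have eS: "\<eta> \<in> \<Psi>" using Psi eP by auto
      have "\<eta> \<noteq> d"
      proof
        assume "\<eta> = d"
        then have "g = - d" using gi refl_vec_self rnz[OF dP] by simp
        then show False using x0 xd by simp
      qed
      then have "2 * (\<eta> \<bullet> d) = N" using pair eS d by auto
      then have "g = \<eta> - d" unfolding gi refl_vec_def dd using N by simp
      then show ?thesis unfolding D_def using eS d \<open>\<eta> \<noteq> d\<close> by blast
    next
      case False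
      then have "x \<bullet> (-\<eta>) > 0" using xe0 by simp
      then have eS: "-\<eta> \<in> \<Psi>" using Psi roots_neg[OF root eP] by auto
      have "-\<eta> \<noteq> d"
      proof
        assume "-\<eta> = d"
        then have "g = d" using gi refl_vec_self rnz[OF dP] linear_refl_vec
          by (metis linear_neg minus_minus)
        then show False using x0 xd by simp
      qed
      then have "2 * ((-\<eta>) \<bullet> d) = N" using pair eS d by auto
      then have c: "2 * (\<eta> \<bullet> d) / (d \<bullet> d) = -1" using dd N by (simp add: field_simps)
      have "g = d - (-\<eta>)" unfolding gi refl_vec_def c by simp
      then show ?thesis unfolding D_def using eS d \<open>-\<eta> \<noteq> d\<close> by blast
    qed
  qed
  define \<Phi>2 where "\<Phi>2 = {g\<in>\<Phi>. \<forall>d\<in>\<Psi>. g \<bullet> d = 0}"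
  have orthD: "v \<bullet> g = 0" if "g \<in> \<Phi>2" "v \<in> \<Psi> \<union> uminus ` \<Psi> \<union> D" for v g
  proof -
    have h: "\<forall>d\<in>\<Psi>. d \<bullet> g = 0" using that(1) unfolding \<Phi>2_def by (auto simp: inner_commute)
    show ?thesis using that(2) h unfolding D_def by (auto simp: inner_diff_left)
  qed
  have "\<Phi>2 = {}"
  proof (rule irr[OF root S gen])
    show "\<Phi>2 \<subseteq> \<Phi>" unfolding \<Phi>2_def by auto
    show "\<forall>g\<in>\<Phi>2. x \<bullet> g = 0"
    proof
      fix g assume g2: "g \<in> \<Phi>2"
      show "x \<bullet> g = 0"
      proof (rule ccontr)
        assume "x \<bullet> g \<noteq> 0"
        then have "g \<in> \<Psi> \<union> uminus ` \<Psi> \<union> D" using cls g2 a0 unfolding \<Phi>2_def by blast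
        then have "g \<bullet> g = 0" using orthD[OF g2] by blast
        then show False using rnz g2 unfolding \<Phi>2_def by auto
      qed
    qed
    show "\<forall>g\<in>\<Phi>. g \<notin> \<Phi>2 \<longrightarrow> (\<forall>d\<in>\<Phi>2. g \<bullet> d = 0)"
    proof (intro ballI impI)
      fix g d assume g: "g \<in> \<Phi>" "g \<notin> \<Phi>2" and d: "d \<in> \<Phi>2"
      then have "g \<in> \<Psi> \<union> uminus ` \<Psi> \<union> D" using cls unfolding \<Phi>2_def by blast
      then show "g \<bullet> d = 0" using orthD[OF d] by blast
    qed
  qed
  have Phi: "\<Phi> = \<Psi> \<union> uminus ` \<Psi> \<union> D"
  proof
    show "\<Phi> \<subseteq> \<Psi> \<union> uminus ` \<Psi> \<union> D"
    proof
      fix g assume g: "g \<in> \<Phi>"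
      then have "g \<notin> \<Phi>2" using \<open>\<Phi>2 = {}\<close> by auto
      then show "g \<in> \<Psi> \<union> uminus ` \<Psi> \<union> D" using cls g unfolding \<Phi>2_def by blast
    qed
  next
    show "\<Psi> \<union> uminus ` \<Psi> \<union> D \<subseteq> \<Phi>"
    proof
      fix g assume "g \<in> \<Psi> \<union> uminus ` \<Psi> \<union> D"
      then consider "g \<in> \<Psi>" | "g \<in> uminus ` \<Psi>" | a b where "a \<in> \<Psi>" "b \<in> \<Psi>" "a \<noteq> b" "g = a - b"
        unfolding D_def by blast
      then show "g \<in> \<Phi>"
      proof cases
        case 1 then show ?thesis using PsiP by auto
      next
        case 2 then show ?thesis using PsiP roots_neg[OF root] by auto
      next
        case 3
        have "refl_vec b a = a - b" using pair nrm 3 N unfolding refl_vec_def by auto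
        then show ?thesis using roots_refl[OF root] 3 PsiP by (metis subsetD)
      qed
    qed
  qed
  have "type_A (card \<Psi>) \<Phi>"
    by (rule G[OF fin N nrm pair Phi[unfolded D_def]]) (use root in \<open>simp add: root_system_def\<close>)
  moreover have "card \<Psi> \<ge> 1" using fin ne by (simp add: Suc_le_eq card_gt_0_iff)
  ultimately show ?thesis by blast
qed

lemma diffs2: "p \<noteq> q \<Longrightarrow> {a - b | a b. a \<in> {p, q} \<and> b \<in> {p, q} \<and> a \<noteq> b} = {p - q, q - p}"
  by auto

lemma tri_case:
  fixes \<Phi> S :: "'a::euclidean_space set"
  assumes root: "root_system \<Phi>" and S: "S = (\<lambda>w. w x) ` weyl_group \<Phi>" and gen: "span S = UNIV"
    and n4: "no4 S" and xS: "x \<in> S" and cl: "\<forall>\<gamma>\<in>\<Phi>. \<forall>\<nu>\<in>S. refl_vec \<gamma> \<nu> \<in> S"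
    and aP: "\<alpha> \<in> \<Phi>" and bP: "\<beta> \<in> \<Phi>" and xa: "x \<bullet> \<alpha> > 0" and xb: "x \<bullet> \<beta> > 0"
    and ab: "\<alpha> \<bullet> \<beta> < 0"
  shows "\<exists>l\<ge>1. type_A l \<Phi>"
proof -
  have rnz: "\<And>g. g \<in> \<Phi> \<Longrightarrow> g \<noteq> 0" using roots_nz[OF root] by auto
  define N where "N = \<alpha> \<bullet> \<alpha>"
  have N: "N > 0" using rnz[OF aP] unfolding N_def by auto
  have SB: "h \<bullet> h = g \<bullet> g \<and> (2 * (g \<bullet> h) = g \<bullet> g \<or> 2 * (g \<bullet> h) = - (g \<bullet> g))"
    if "g \<in> \<Phi>" "h \<in> \<Phi>" "x \<bullet> g > 0" "x \<bullet> h > 0" "g \<noteq> h" for g h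
  proof -
    have "h \<noteq> - g" using that by auto
    then show ?thesis using stepB[OF root n4 cl xS, of g h] that by auto
  qed
  have "\<alpha> \<noteq> \<beta>" proof assume "\<alpha> = \<beta>" then show False using ab by (metis inner_ge_zero not_le) qed
  then have bb: "\<beta> \<bullet> \<beta> = N" and ab2: "2 * (\<alpha> \<bullet> \<beta>) = - N"
    using SB[OF aP bP xa xb] ab N unfolding N_def by auto
  have ba2: "2 * (\<beta> \<bullet> \<alpha>) = - N" using ab2 by (simp add: inner_commute)
  have "refl_vec \<beta> \<alpha> = \<alpha> + \<beta>"
  proof -
    have "2 * (\<alpha> \<bullet> \<beta>) / (\<beta> \<bullet> \<beta>) = -1" using ab2 bb N by (simp add: field_simps)
    then show ?thesis unfolding refl_vec_def by simp
  qed
  then have abP: "\<alpha> + \<beta> \<in> \<Phi>" using roots_refl[OF root bP aP] by simp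
  have xab: "x \<bullet> (\<alpha> + \<beta>) > 0" using xa xb by (simp add: inner_add_right)
  have abab: "(\<alpha> + \<beta>) \<bullet> (\<alpha> + \<beta>) = N"
    using ab2 bb unfolding N_def by (simp add: inner_add_left inner_add_right inner_commute)
  define T3 where "T3 = {\<alpha>, \<beta>, \<alpha> + \<beta>}"
  have C1: "g \<in> T3" if g: "g \<in> \<Phi>" "x \<bullet> g > 0" for g
  proof (rule ccontr)
    assume "g \<notin> T3"
    then have ne: "\<alpha> \<noteq> g" "\<beta> \<noteq> g" "\<alpha> + \<beta> \<noteq> g" unfolding T3_def by auto
    have h1: "2 * (\<alpha> \<bullet> g) = N \<or> 2 * (\<alpha> \<bullet> g) = - N" using SB[OF aP g(1) xa g(2) ne(1)] N_def by auto
    have h2: "2 * (\<beta> \<bullet> g) = N \<or> 2 * (\<beta> \<bullet> g) = - N" using SB[OF bP g(1) xb g(2) ne(2)] bb by auto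
    have h3: "2 * ((\<alpha> + \<beta>) \<bullet> g) = N \<or> 2 * ((\<alpha> + \<beta>) \<bullet> g) = - N"
      using SB[OF abP g(1) xab g(2) ne(3)] abab by auto
    then have "2 * (\<alpha> \<bullet> g) + 2 * (\<beta> \<bullet> g) = N \<or> 2 * (\<alpha> \<bullet> g) + 2 * (\<beta> \<bullet> g) = - N"
      by (simp add: inner_add_left algebra_simps)
    then show False using h1 h2 N by auto
  qed
  have T3pm: "g \<in> T3 \<or> - g \<in> T3" if g: "g \<in> \<Phi>" "x \<bullet> g \<noteq> 0" for g
  proof (cases "x \<bullet> g > 0")
    case True then show ?thesis using C1 g by auto
  next
    case False
    then have "x \<bullet> (-g) > 0" using g by simp
    then show ?thesis using C1 roots_neg[OF root g(1)] by auto
  qed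
  have rab: "refl_vec \<alpha> \<alpha> = - \<alpha>" "refl_vec \<alpha> \<beta> = \<alpha> + \<beta>" "refl_vec \<alpha> (\<alpha> + \<beta>) = \<beta>"
     "refl_vec \<beta> \<alpha> = \<alpha> + \<beta>" "refl_vec \<beta> \<beta> = - \<beta>" "refl_vec \<beta> (\<alpha> + \<beta>) = \<alpha>"
  proof -
    have r1: "2 * (\<beta> \<bullet> \<alpha>) / (\<alpha> \<bullet> \<alpha>) = -1" "2 * (\<alpha> \<bullet> \<beta>) / (\<beta> \<bullet> \<beta>) = -1"
      using ab2 ba2 bb N N_def by (simp_all add: field_simps)
    have r2: "2 * ((\<alpha> + \<beta>) \<bullet> \<alpha>) / (\<alpha> \<bullet> \<alpha>) = 1" "2 * ((\<alpha> + \<beta>) \<bullet> \<beta>) / (\<beta> \<bullet> \<beta>) = 1"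
      using ab2 ba2 bb N N_def by (simp_all add: field_simps inner_add_left)
    show "refl_vec \<alpha> \<alpha> = - \<alpha>" "refl_vec \<beta> \<beta> = - \<beta>" using refl_vec_self rnz aP bP by auto
    show "refl_vec \<alpha> \<beta> = \<alpha> + \<beta>" "refl_vec \<beta> \<alpha> = \<alpha> + \<beta>"
      unfolding refl_vec_def r1 by simp_all
    show "refl_vec \<alpha> (\<alpha> + \<beta>) = \<beta>" "refl_vec \<beta> (\<alpha> + \<beta>) = \<alpha>"
      unfolding refl_vec_def r2 by simp_all
  qed
  have C2: "g \<bullet> \<alpha> = 0 \<and> g \<bullet> \<beta> = 0" if g: "g \<in> \<Phi>" "x \<bullet> g = 0" for g
  proof (rule ccontr)
    assume "\<not> ?thesis"
    then obtain d where d: "d \<in> {\<alpha>, \<beta>}" "g \<bullet> d \<noteq> 0" by auto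
    have dP: "d \<in> \<Phi>" and xd: "x \<bullet> d > 0" using d aP bP xa xb by auto
    define \<eta> where "\<eta> = refl_vec d g"
    have eP: "\<eta> \<in> \<Phi>" unfolding \<eta>_def using roots_refl[OF root dP g(1)] .
    have "d \<bullet> d > 0" using rnz[OF dP] by simp
    then have "x \<bullet> \<eta> \<noteq> 0"
      unfolding \<eta>_def refl_vec_inner_expand g(2) using d(2) xd by simp
    then have T: "\<eta> \<in> T3 \<or> - \<eta> \<in> T3" using T3pm eP by auto
    have gi: "g = refl_vec d \<eta>" unfolding \<eta>_def using refl_vec_invol[OF rnz[OF dP]] by simp
    have ng: "refl_vec d (- v) = - refl_vec d v" for v using linear_refl_vec[of d] by (simp add: linear_neg)
    have rT: "refl_vec d t \<in> T3 \<or> - (refl_vec d t) \<in> T3" if "t \<in> T3" for t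
      using that d(1) unfolding T3_def by (auto simp: rab)
    have "g \<in> T3 \<or> - g \<in> T3"
    proof (cases "\<eta> \<in> T3")
      case True then show ?thesis using rT gi by simp
    next
      case False
      then have "- \<eta> \<in> T3" using T by simp
      moreover have "g = - refl_vec d (- \<eta>)" unfolding gi ng by simp
      ultimately show ?thesis using rT[of "- \<eta>"] by auto
    qed
    then have "x \<bullet> g \<noteq> 0" unfolding T3_def using xa xb xab by (auto simp: minus_equation_iff[of g] inner_add_right inner_diff_right)
    then show False using g by simp
  qed
  define \<Phi>2 where "\<Phi>2 = {g\<in>\<Phi>. g \<bullet> \<alpha> = 0 \<and> g \<bullet> \<beta> = 0}"
  have T3nz: "t \<bullet> \<alpha> \<noteq> 0" if "t \<in> T3" for t
  proof -
    have v: "\<alpha> \<bullet> \<alpha> = N" "\<beta> \<bullet> \<alpha> = - N/2" "(\<alpha> + \<beta>) \<bullet> \<alpha> = N/2"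
      using ba2 N_def by (simp_all add: inner_add_left)
    show ?thesis using that v N unfolding T3_def by auto
  qed
  have "\<Phi>2 = {}"
  proof (rule irr[OF root S gen])
    show "\<Phi>2 \<subseteq> \<Phi>" unfolding \<Phi>2_def by auto
    show "\<forall>g\<in>\<Phi>2. x \<bullet> g = 0"
    proof
      fix g assume g2: "g \<in> \<Phi>2"
      show "x \<bullet> g = 0"
      proof (rule ccontr)
        assume "x \<bullet> g \<noteq> 0"
        then have "g \<in> T3 \<or> - g \<in> T3" using T3pm g2 unfolding \<Phi>2_def by auto
        moreover have "g \<bullet> \<alpha> = 0" using g2 unfolding \<Phi>2_def by auto
        ultimately show False using T3nz[of g] T3nz[of "-g"] by auto
      qed
    qed
    show "\<forall>g\<in>\<Phi>. g \<notin> \<Phi>2 \<longrightarrow> (\<forall>d\<in>\<Phi>2. g \<bullet> d = 0)"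
    proof (intro ballI impI)
      fix g d assume g: "g \<in> \<Phi>" "g \<notin> \<Phi>2" and d: "d \<in> \<Phi>2"
      then have "x \<bullet> g \<noteq> 0" using C2 unfolding \<Phi>2_def by auto
      then have "g \<in> T3 \<or> - g \<in> T3" using T3pm g by auto
      moreover have "d \<bullet> \<alpha> = 0" "d \<bullet> \<beta> = 0" using d unfolding \<Phi>2_def by auto
      ultimately show "g \<bullet> d = 0" unfolding T3_def
        by (auto simp: inner_commute[of _ d] inner_add_right inner_diff_right minus_equation_iff[of g])
    qed
  qed
  have all: "g \<in> T3 \<or> - g \<in> T3" if "g \<in> \<Phi>" for g
  proof -
    have "g \<notin> \<Phi>2" using \<open>\<Phi>2 = {}\<close> by auto
    then have "x \<bullet> g \<noteq> 0" using C2 that unfolding \<Phi>2_def by auto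
    then show ?thesis using T3pm that by auto
  qed
  define \<Psi> where "\<Psi> = {\<alpha>, \<alpha> + \<beta>}"
  have bnz: "\<beta> \<noteq> 0" using rnz bP by auto
  have anab: "\<alpha> \<noteq> \<alpha> + \<beta>" using bnz by (metis add_cancel_left_right)
  have Phi: "\<Phi> = \<Psi> \<union> uminus ` \<Psi> \<union> {a - b | a b. a \<in> \<Psi> \<and> b \<in> \<Psi> \<and> a \<noteq> b}"
    unfolding \<Psi>_def diffs2[OF anab]
  proof
    show "\<Phi> \<subseteq> {\<alpha>, \<alpha> + \<beta>} \<union> uminus ` {\<alpha>, \<alpha> + \<beta>} \<union> {\<alpha> - (\<alpha> + \<beta>), \<alpha> + \<beta> - \<alpha>}"
    proof
      fix g assume "g \<in> \<Phi>"
      then have "g \<in> T3 \<or> - g \<in> T3" using all by auto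
      then show "g \<in> {\<alpha>, \<alpha> + \<beta>} \<union> uminus ` {\<alpha>, \<alpha> + \<beta>} \<union> {\<alpha> - (\<alpha> + \<beta>), \<alpha> + \<beta> - \<alpha>}"
        unfolding T3_def by (auto simp: minus_equation_iff[of g])
    qed
    show "{\<alpha>, \<alpha> + \<beta>} \<union> uminus ` {\<alpha>, \<alpha> + \<beta>} \<union> {\<alpha> - (\<alpha> + \<beta>), \<alpha> + \<beta> - \<alpha>} \<subseteq> \<Phi>"
      using aP abP bP roots_neg[OF root] roots_neg[OF root abP] by auto
  qed
  have nrm: "\<forall>a\<in>\<Psi>. a \<bullet> a = N" unfolding \<Psi>_def using abab N_def by auto
  have pair: "\<forall>a\<in>\<Psi>. \<forall>b\<in>\<Psi>. a \<noteq> b \<longrightarrow> 2 * (a \<bullet> b) = N"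
    unfolding \<Psi>_def using ab2 ba2 N_def by (auto simp: inner_add_left inner_add_right algebra_simps)
  have "type_A (card \<Psi>) \<Phi>"
    by (rule G[OF _ N nrm pair Phi]) (use root in \<open>simp_all add: root_system_def \<Psi>_def\<close>)
  moreover have "card \<Psi> \<ge> 1" unfolding \<Psi>_def using anab by simp
  ultimately show ?thesis by blast
qed

lemma part1:
  fixes \<Phi> S :: "'a::euclidean_space set"
  assumes root: "root_system \<Phi>" and nontriv: "\<Phi> \<noteq> {}"
    and S: "S = (\<lambda>w. w x) ` weyl_group \<Phi>" and gen: "span S = UNIV" and n4: "no4 S"
  shows "\<exists>l\<ge>1. type_A l \<Phi>"
proof -
  note su = setup_orbit[OF root nontriv S gen]
  define \<Psi> where "\<Psi> = {\<alpha>\<in>\<Phi>. x \<bullet> \<alpha> > 0}"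
  have ne: "\<Psi> \<noteq> {}" using su(3) unfolding \<Psi>_def by auto
  show ?thesis
  proof (cases "\<exists>a\<in>\<Psi>. \<exists>b\<in>\<Psi>. a \<bullet> b < 0")
    case True
    then obtain a b where "a \<in> \<Psi>" "b \<in> \<Psi>" "a \<bullet> b < 0" by blast
    then show ?thesis using tri_case[OF root S gen n4 su(1) su(2), of a b] unfolding \<Psi>_def by auto
  next
    case False
    then have "\<forall>a\<in>\<Psi>. \<forall>b\<in>\<Psi>. a \<bullet> b \<ge> 0" by (simp add: not_less)
    then show ?thesis using star_case[OF root S gen n4 su(1) su(2) \<Psi>_def ne] by blast
  qed
qed

lemma iso_facts:
  fixes e :: "nat \<Rightarrow> 'a::real_inner"
  assumes iso: "isometric_quotient_basis l e"
  shows "\<And>i j. i \<le> l \<Longrightarrow> j \<le> l \<Longrightarrow> e i \<bullet> e j = (if i = j then 1 else 0) - 1 / (real l + 1)"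
    and "(\<Sum>i\<le>l. e i) = 0"
    and "inj_on e {..l}"
    and "\<And>c a b. a \<le> l \<Longrightarrow> b \<le> l \<Longrightarrow> (\<Sum>k\<le>l. c k *\<^sub>R e k) \<bullet> (e a - e b) = c a - c b"
    and "\<And>a b. a \<le> l \<Longrightarrow> b \<le> l \<Longrightarrow> a \<noteq> b \<Longrightarrow> (e a - e b) \<bullet> (e a - e b) = 2"
    and "\<And>a b u. a \<le> l \<Longrightarrow> b \<le> l \<Longrightarrow> a \<noteq> b \<Longrightarrow>
           refl_vec (e a - e b) u = u - (u \<bullet> (e a - e b)) *\<^sub>R (e a - e b)"
proof -
  show ip: "\<And>i j. i \<le> l \<Longrightarrow> j \<le> l \<Longrightarrow> e i \<bullet> e j = (if i = j then 1 else 0) - 1 / (real l + 1)"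
    using iso unfolding isometric_quotient_basis_def by auto
  have rel: "\<forall>c::nat \<Rightarrow> real. (\<Sum>i\<le>l. c i *\<^sub>R e i) = 0 \<longleftrightarrow> (\<forall>i\<le>l. c i = c 0)"
    using iso unfolding isometric_quotient_basis_def quotient_basis_def by (elim conjE)
  have "(\<Sum>i\<le>l. (\<lambda>_. 1::real) i *\<^sub>R e i) = 0"
    using spec[OF rel, of "\<lambda>_. 1"] by simp
  then show "(\<Sum>i\<le>l. e i) = 0" by simp
  show "inj_on e {..l}"
  proof (rule inj_onI)
    fix i j assume ij: "i \<in> {..l}" "j \<in> {..l}" "e i = e j"
    show "i = j"
    proof (rule ccontr)
      assume "i \<noteq> j"
      have "e i \<bullet> e i = e i \<bullet> e j" using ij by simp
      then show False using ip[of i i] ip[of i j] ij \<open>i \<noteq> j\<close> by simp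
    qed
  qed
  have ce: "(\<Sum>k\<le>l. c k *\<^sub>R e k) \<bullet> e a = c a - (\<Sum>k\<le>l. c k) / (real l + 1)" if a: "a \<le> l" for c a
  proof -
    have "(\<Sum>k\<le>l. c k *\<^sub>R e k) \<bullet> e a = (\<Sum>k\<le>l. c k * (e k \<bullet> e a))" by (simp add: inner_sum_left)
    also have "\<dots> = (\<Sum>k\<le>l. (if k = a then c k else 0) - c k / (real l + 1))"
      using a by (intro sum.cong refl) (auto simp: ip divide_simps algebra_simps)
    also have "\<dots> = c a - (\<Sum>k\<le>l. c k) / (real l + 1)"
      using a by (simp add: sum_subtractf sum_divide_distrib)
    finally show ?thesis .
  qed
  show "\<And>c a b. a \<le> l \<Longrightarrow> b \<le> l \<Longrightarrow> (\<Sum>k\<le>l. c k *\<^sub>R e k) \<bullet> (e a - e b) = c a - c b"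
    using ce by (simp add: inner_diff_right)
  show nn: "\<And>a b. a \<le> l \<Longrightarrow> b \<le> l \<Longrightarrow> a \<noteq> b \<Longrightarrow> (e a - e b) \<bullet> (e a - e b) = 2"
    using ip by (simp add: inner_diff_left inner_diff_right inner_commute)
  show "\<And>a b u. a \<le> l \<Longrightarrow> b \<le> l \<Longrightarrow> a \<noteq> b \<Longrightarrow>
           refl_vec (e a - e b) u = u - (u \<bullet> (e a - e b)) *\<^sub>R (e a - e b)"
    unfolding refl_vec_def using nn by simp
qed

lemma comb:
  fixes \<xi> :: "nat \<Rightarrow> real"
  assumes P: "\<And>a b c d. a \<le> l \<Longrightarrow> b \<le> l \<Longrightarrow> c \<le> l \<Longrightarrow> d \<le> l \<Longrightarrow> distinct [a,b,c,d] \<Longrightarrow> \<xi> a = \<xi> b \<or> \<xi> c = \<xi> d"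
  shows "(\<exists>k\<le>l. \<exists>t. \<forall>j\<le>l. j \<noteq> k \<longrightarrow> \<xi> j = t) \<or> (l = 2 \<and> \<xi> 0 \<noteq> \<xi> 1 \<and> \<xi> 0 \<noteq> \<xi> 2 \<and> \<xi> 1 \<noteq> \<xi> 2)"
proof (cases "\<exists>i\<le>l. \<exists>j\<le>l. \<xi> i \<noteq> \<xi> j")
  case False
  then have "\<forall>j\<le>l. j \<noteq> 0 \<longrightarrow> \<xi> j = \<xi> 0" using le0 by blast
  then show ?thesis by blast
next
  case True
  then obtain i j where ij: "i \<le> l" "j \<le> l" "\<xi> i \<noteq> \<xi> j" by blast
  then have inj: "i \<noteq> j" by auto
  have oth: "\<xi> m = \<xi> m'" if "m \<le> l" "m' \<le> l" "m \<notin> {i,j}" "m' \<notin> {i,j}" for m m'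
    using P[of i j m m'] ij that by (cases "m = m'") auto
  show ?thesis
  proof (cases "\<forall>m\<le>l. m \<notin> {i,j} \<longrightarrow> \<xi> m = \<xi> i")
    case True
    then have "\<forall>m\<le>l. m \<noteq> j \<longrightarrow> \<xi> m = \<xi> i" by auto
    then show ?thesis using ij by blast
  next
    case F1: False
    then obtain m1 where m1: "m1 \<le> l" "m1 \<notin> {i,j}" "\<xi> m1 \<noteq> \<xi> i" by blast
    show ?thesis
    proof (cases "\<forall>m\<le>l. m \<notin> {i,j} \<longrightarrow> \<xi> m = \<xi> j")
      case True
      then have "\<forall>m\<le>l. m \<noteq> i \<longrightarrow> \<xi> m = \<xi> j" by auto
      then show ?thesis using ij by blast
    next
      case F2: False
      then obtain m2 where m2: "m2 \<le> l" "m2 \<notin> {i,j}" "\<xi> m2 \<noteq> \<xi> j" by blast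
      show ?thesis
      proof (cases "m1 = m2")
        case False
        have "\<xi> m1 = \<xi> m2" using oth m1 m2 by blast
        then show ?thesis using P[of i m1 j m2] ij m1 m2 False by auto
      next
        case True
        show ?thesis
        proof (cases "\<exists>m'\<le>l. m' \<notin> {i,j,m1}")
          case True
          then obtain m' where m': "m' \<le> l" "m' \<notin> {i,j,m1}" by blast
          have "\<xi> m' = \<xi> m1" using oth m1 m' by blast
          then show ?thesis using P[of i m' j m1] ij m1 m2 m' \<open>m1 = m2\<close> by auto
        next
          case False
          then have all: "\<forall>p\<le>l. p = i \<or> p = j \<or> p = m1" by auto
          have sub: "{..l} \<subseteq> {i,j,m1}" using all by auto
          have sub2: "{i,j,m1} \<subseteq> {..l}" using ij m1 by auto
          have eq: "{..l} = {i,j,m1}" using sub sub2 by blast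
          have "card {i,j,m1} = 3" using inj m1 by auto
          then have "Suc l = 3" using eq by (metis card_atMost)
          then have l2: "l = 2" by simp
          have d: "\<xi> i \<noteq> \<xi> j" "\<xi> m1 \<noteq> \<xi> i" "\<xi> m1 \<noteq> \<xi> j" using ij m1 m2 \<open>m1 = m2\<close> by auto
          have "\<xi> p \<noteq> \<xi> q" if "p \<le> l" "q \<le> l" "p \<noteq> q" for p q
          proof -
            have "p = i \<or> p = j \<or> p = m1" "q = i \<or> q = j \<or> q = m1" using all that by auto
            then show ?thesis using d that by auto
          qed
          then show ?thesis using l2 by simp
        qed
      qed
    qed
  qed
qed

lemma six:
  fixes e :: "nat \<Rightarrow> 'a::real_inner"
  assumes iso: "isometric_quotient_basis 2 e"
    and cl: "\<And>a b u. a \<le> 2 \<Longrightarrow> b \<le> 2 \<Longrightarrow> a \<noteq> b \<Longrightarrow> u \<in> S \<Longrightarrow> refl_vec (e a - e b) u \<in> S"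
    and xS: "\<xi>0 *\<^sub>R e 0 + \<xi>1 *\<^sub>R e 1 + \<xi>2 *\<^sub>R e 2 \<in> S"
    and d: "\<xi>0 \<noteq> \<xi>1" "\<xi>0 \<noteq> \<xi>2" "\<xi>1 \<noteq> \<xi>2"
  shows "\<exists>l1\<in>S. \<exists>l2\<in>S. \<exists>l3\<in>S. \<exists>l4\<in>S. \<exists>l5\<in>S. \<exists>l6\<in>S.
                      distinct [l1, l2, l3, l4, l5, l6] \<and> l1 + l2 + l3 = l4 + l5 + l6"
proof -
  note F = iso_facts[OF iso]
  have ip: "e 0 \<bullet> e 0 = 2/3" "e 1 \<bullet> e 1 = 2/3" "e 2 \<bullet> e 2 = 2/3"
    "e 0 \<bullet> e 1 = -1/3" "e 0 \<bullet> e 2 = -1/3" "e 1 \<bullet> e 2 = -1/3"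
    "e 1 \<bullet> e 0 = -1/3" "e 2 \<bullet> e 0 = -1/3" "e 2 \<bullet> e 1 = -1/3"
    using F(1)[of 0 0] F(1)[of 1 1] F(1)[of 2 2] F(1)[of 0 1] F(1)[of 0 2] F(1)[of 1 2]
      F(1)[of 1 0] F(1)[of 2 0] F(1)[of 2 1] by simp_all
  define v where "v a b c = a *\<^sub>R e 0 + b *\<^sub>R e 1 + c *\<^sub>R e 2" for a b c
  have rel: "\<forall>c::nat \<Rightarrow> real. (\<Sum>i\<le>2. c i *\<^sub>R e i) = 0 \<longleftrightarrow> (\<forall>i\<le>2. c i = c 0)"
    using iso unfolding isometric_quotient_basis_def quotient_basis_def by (elim conjE)
  have veq: "a - a' = b - b' \<and> b - b' = c - c'" if "v a b c = v a' b' c'" for a b c a' b' c'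
  proof -
    define f where "f i = (if i = 0 then a - a' else if i = 1 then b - b' else c - c')" for i :: nat
    have "(\<Sum>i\<le>2. f i *\<^sub>R e i) = v a b c - v a' b' c'"
      unfolding f_def v_def by (simp add: numeral_2_eq_2 algebra_simps)
    then have "(\<Sum>i\<le>2. f i *\<^sub>R e i) = 0" using that by simp
    from iffD1[OF spec[OF rel, of f] this] have fa: "\<forall>i\<le>2. f i = f 0" .
    have "f 1 = f 0" using fa[rule_format, of 1] by simp
    moreover have "f 2 = f 0" using fa[rule_format, of 2] by simp
    ultimately show ?thesis unfolding f_def by simp
  qed
  have inn: "v a b c \<bullet> (e 0 - e 1) = a - b" "v a b c \<bullet> (e 1 - e 2) = b - c" "v a b c \<bullet> (e 0 - e 2) = a - c"
    for a b c unfolding v_def by (simp_all add: inner_add_left inner_diff_right ip ip[unfolded One_nat_def] algebra_simps)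
  have r01: "refl_vec (e 0 - e 1) (v a b c) = v b a c" for a b c
  proof -
    have "refl_vec (e 0 - e 1) (v a b c) = v a b c - (v a b c \<bullet> (e 0 - e 1)) *\<^sub>R (e 0 - e 1)"
      by (rule F(6)) simp_all
    then show ?thesis unfolding inn unfolding v_def by (simp add: algebra_simps)
  qed
  have r12: "refl_vec (e 1 - e 2) (v a b c) = v a c b" for a b c
  proof -
    have "refl_vec (e 1 - e 2) (v a b c) = v a b c - (v a b c \<bullet> (e 1 - e 2)) *\<^sub>R (e 1 - e 2)"
      by (rule F(6)) simp_all
    then show ?thesis unfolding inn unfolding v_def by (simp add: algebra_simps)
  qed
  have r02: "refl_vec (e 0 - e 2) (v a b c) = v c b a" for a b c
  proof -
    have "refl_vec (e 0 - e 2) (v a b c) = v a b c - (v a b c \<bullet> (e 0 - e 2)) *\<^sub>R (e 0 - e 2)"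
      by (rule F(6)) simp_all
    then show ?thesis unfolding inn unfolding v_def by (simp add: algebra_simps)
  qed
  have x: "v \<xi>0 \<xi>1 \<xi>2 \<in> S" using xS unfolding v_def .
  have c01: "u \<in> S \<Longrightarrow> refl_vec (e 0 - e 1) u \<in> S" for u using cl[of 0 1 u] by simp
  have c12: "u \<in> S \<Longrightarrow> refl_vec (e 1 - e 2) u \<in> S" for u using cl[of 1 2 u] by simp
  have c02: "u \<in> S \<Longrightarrow> refl_vec (e 0 - e 2) u \<in> S" for u using cl[of 0 2 u] by simp
  have p4: "v \<xi>1 \<xi>0 \<xi>2 \<in> S" using c01[OF x] r01 by simp
  have p5: "v \<xi>0 \<xi>2 \<xi>1 \<in> S" using c12[OF x] r12 by simp
  have p6: "v \<xi>2 \<xi>1 \<xi>0 \<in> S" using c02[OF x] r02 by simp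
  have p2: "v \<xi>2 \<xi>0 \<xi>1 \<in> S" using c01[OF p5] r01 by simp
  have p3: "v \<xi>1 \<xi>2 \<xi>0 \<in> S" using c12[OF p4] r12 by simp
  have sum: "v \<xi>0 \<xi>1 \<xi>2 + v \<xi>2 \<xi>0 \<xi>1 + v \<xi>1 \<xi>2 \<xi>0 = v \<xi>1 \<xi>0 \<xi>2 + v \<xi>0 \<xi>2 \<xi>1 + v \<xi>2 \<xi>1 \<xi>0"
    unfolding v_def by (simp add: algebra_simps)
  have ne: "v a b c \<noteq> v a' b' c'" if "\<not> (a - a' = b - b' \<and> b - b' = c - c')" for a b c a' b' c'
    using veq that by blast
  have "distinct [v \<xi>0 \<xi>1 \<xi>2, v \<xi>2 \<xi>0 \<xi>1, v \<xi>1 \<xi>2 \<xi>0, v \<xi>1 \<xi>0 \<xi>2, v \<xi>0 \<xi>2 \<xi>1, v \<xi>2 \<xi>1 \<xi>0]"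
    using d by (simp add: ne; linarith)
  then show ?thesis using x p2 p3 p4 p5 p6 sum by blast
qed

lemma part2:
  fixes \<Phi> S :: "'a::euclidean_space set"
  assumes root: "root_system \<Phi>" and nontriv: "\<Phi> \<noteq> {}"
    and S: "S = (\<lambda>w. w x) ` weyl_group \<Phi>" and gen: "span S = UNIV" and n4: "no4 S"
    and l1: "l \<ge> 1" and iso: "isometric_quotient_basis l e" and Phi: "\<Phi> = A_roots l e"
    and c6: "l \<noteq> 2 \<or> \<not> (\<exists>l1\<in>S. \<exists>l2\<in>S. \<exists>l3\<in>S. \<exists>l4\<in>S. \<exists>l5\<in>S. \<exists>l6\<in>S.
                      distinct [l1, l2, l3, l4, l5, l6] \<and> l1 + l2 + l3 = l4 + l5 + l6)"
  shows "\<exists>c::real. c \<noteq> 0 \<and> S = {c *\<^sub>R e i | i. i \<le> l}"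
proof -
  note su = setup_orbit[OF root nontriv S gen]
  have x0: "x \<noteq> 0" using su(3) by auto
  note F = iso_facts[OF iso]
  have sp: "span (e ` {..l}) = UNIV"
    using iso unfolding isometric_quotient_basis_def quotient_basis_def atLeast0AtMost by blast
  obtain u where "x = (\<Sum>v\<in>e ` {..l}. u v *\<^sub>R v)"
    using span_finite[of "e ` {..l}"] sp by auto
  then have xr: "x = (\<Sum>i\<le>l. (u \<circ> e) i *\<^sub>R e i)"
    by (simp add: sum.reindex[OF F(3)])
  define \<xi> where "\<xi> = u \<circ> e"
  have xr: "x = (\<Sum>i\<le>l. \<xi> i *\<^sub>R e i)" using xr \<xi>_def by simp
  have rootsA: "e a - e b \<in> \<Phi>" if "a \<le> l" "b \<le> l" "a \<noteq> b" for a b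
    unfolding Phi A_roots_def using that by blast
  have xin: "x \<bullet> (e a - e b) = \<xi> a - \<xi> b" if "a \<le> l" "b \<le> l" for a b
    unfolding xr using F(4) that by simp
  have disj: "\<xi> a = \<xi> b \<or> \<xi> c = \<xi> d"
    if abcd: "a \<le> l" "b \<le> l" "c \<le> l" "d \<le> l" "distinct [a,b,c,d]" for a b c d
  proof (rule ccontr)
    assume "\<not> ?thesis"
    then have ne: "\<xi> a \<noteq> \<xi> b" "\<xi> c \<noteq> \<xi> d" by auto
    define \<alpha> where "\<alpha> = e a - e b"
    define \<beta> where "\<beta> = e c - e d"
    have aP: "\<alpha> \<in> \<Phi>" "\<beta> \<in> \<Phi>" unfolding \<alpha>_def \<beta>_def using rootsA abcd by auto
    have ab0: "\<alpha> \<bullet> \<beta> = 0" unfolding \<alpha>_def \<beta>_def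
      using abcd by (simp add: inner_diff_left inner_diff_right F(1))
    have aa: "\<alpha> \<bullet> \<alpha> = 2" unfolding \<alpha>_def using F(5) abcd by simp
    have "\<beta> \<noteq> \<alpha>" using ab0 aa by auto
    moreover have "\<beta> \<noteq> - \<alpha>" using ab0 aa by auto
    moreover have "x \<bullet> \<alpha> \<noteq> 0" "x \<bullet> \<beta> \<noteq> 0" unfolding \<alpha>_def \<beta>_def using xin abcd ne by auto
    ultimately have "2 * (\<alpha> \<bullet> \<beta>) = \<alpha> \<bullet> \<alpha> \<or> 2 * (\<alpha> \<bullet> \<beta>) = - (\<alpha> \<bullet> \<alpha>)"
      using stepB[OF root n4 su(2) su(1) aP] by blast
    then show False using ab0 aa by simp
  qed
  from comb[of l \<xi>, OF disj]
  consider (A) k t where "k \<le> l" "\<forall>j\<le>l. j \<noteq> k \<longrightarrow> \<xi> j = t"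
    | (B) "l = 2" "\<xi> 0 \<noteq> \<xi> 1" "\<xi> 0 \<noteq> \<xi> 2" "\<xi> 1 \<noteq> \<xi> 2" by blast
  then show ?thesis
  proof cases
    case B
    have x3: "x = \<xi> 0 *\<^sub>R e 0 + \<xi> 1 *\<^sub>R e 1 + \<xi> 2 *\<^sub>R e 2"
      unfolding xr B(1) by (simp add: numeral_2_eq_2)
    have "\<exists>l1\<in>S. \<exists>l2\<in>S. \<exists>l3\<in>S. \<exists>l4\<in>S. \<exists>l5\<in>S. \<exists>l6\<in>S.
                      distinct [l1, l2, l3, l4, l5, l6] \<and> l1 + l2 + l3 = l4 + l5 + l6"
    proof (rule six)
      show "isometric_quotient_basis 2 e" using iso B by simp
      show "\<And>a b u. a \<le> 2 \<Longrightarrow> b \<le> 2 \<Longrightarrow> a \<noteq> b \<Longrightarrow> u \<in> S \<Longrightarrow> refl_vec (e a - e b) u \<in> S"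
        using su(2) rootsA B(1) by blast
      show "\<xi> 0 *\<^sub>R e 0 + \<xi> 1 *\<^sub>R e 1 + \<xi> 2 *\<^sub>R e 2 \<in> S" using x3 su(1) by simp
    qed (use B in auto)
    then show ?thesis using c6 B by blast
  next
    case A
    define c where "c = \<xi> k - t"
    have "x = (\<Sum>i\<le>l. t *\<^sub>R e i + (if i = k then c *\<^sub>R e i else 0))"
      unfolding xr c_def using A by (intro sum.cong refl) (auto simp: algebra_simps)
    also have "\<dots> = t *\<^sub>R (\<Sum>i\<le>l. e i) + c *\<^sub>R e k"
      using A(1) by (simp add: sum.distrib scaleR_sum_right)
    finally have xk: "x = c *\<^sub>R e k" using F(2) by simp
    have c0: "c \<noteq> 0"
    proof
      assume "c = 0"
      then have "x = 0" using xk by simp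
      then show False using x0 by simp
    qed
    have refc: "refl_vec \<gamma> (c *\<^sub>R e i) \<in> {c *\<^sub>R e i | i. i \<le> l}" if gi: "\<gamma> \<in> \<Phi>" "i \<le> l" for \<gamma> i
    proof -
      obtain a b where ab: "a \<le> l" "b \<le> l" "a \<noteq> b" "\<gamma> = e a - e b"
        using gi(1) unfolding Phi A_roots_def mem_Collect_eq by blast
      have r: "refl_vec \<gamma> (c *\<^sub>R e i) = c *\<^sub>R e i - ((c *\<^sub>R e i) \<bullet> \<gamma>) *\<^sub>R \<gamma>"
        unfolding ab(4) by (rule F(6)[OF ab(1-3)])
      have ie: "(c *\<^sub>R e i) \<bullet> \<gamma> = c * ((if i = a then 1 else 0) - (if i = b then 1 else 0))"
        unfolding ab(4) using ab gi(2) by (simp add: inner_diff_right F(1) algebra_simps)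
      show ?thesis
      proof (cases "i = a")
        case True
        then have "refl_vec \<gamma> (c *\<^sub>R e i) = c *\<^sub>R e b" unfolding r ie unfolding ab(4) using ab(1-3) by (simp add: algebra_simps)
        then show ?thesis using ab by blast
      next
        case Fa: False
        show ?thesis
        proof (cases "i = b")
          case True
          then have "refl_vec \<gamma> (c *\<^sub>R e i) = c *\<^sub>R e a" unfolding r ie unfolding ab(4) using ab(1-3) Fa by (simp add: algebra_simps)
          then show ?thesis using ab by blast
        next
          case False
          then have "refl_vec \<gamma> (c *\<^sub>R e i) = c *\<^sub>R e i" unfolding r ie using Fa by simp
          then show ?thesis using gi by blast
        qed
      qed
    qed
    have W: "w x \<in> {c *\<^sub>R e i | i. i \<le> l}" if "w \<in> weyl_group \<Phi>" for w
      using that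
    proof (induction rule: weyl_group.induct)
      case weyl_id then show ?case using xk A(1) by auto
    next
      case (weyl_step w \<gamma>)
      then obtain i where "i \<le> l" "w x = c *\<^sub>R e i" by blast
      then show ?case using refc[OF weyl_step.hyps(2)] by auto
    qed
    have "S = {c *\<^sub>R e i | i. i \<le> l}"
    proof
      show "S \<subseteq> {c *\<^sub>R e i | i. i \<le> l}" using W S by blast
      show "{c *\<^sub>R e i | i. i \<le> l} \<subseteq> S"
      proof
        fix v assume "v \<in> {c *\<^sub>R e i | i. i \<le> l}"
        then obtain i where i: "i \<le> l" "v = c *\<^sub>R e i" by blast
        show "v \<in> S"
        proof (cases "i = k")
          case True then show ?thesis using su(1) xk i by simp
        next
          case False
          have "refl_vec (e k - e i) x = x - (x \<bullet> (e k - e i)) *\<^sub>R (e k - e i)"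
            using F(6) A(1) i False by blast
          also have "\<dots> = c *\<^sub>R e i"
          proof -
            have "(c *\<^sub>R e k) \<bullet> (e k - e i) = c"
            proof -
              have kk: "e k \<bullet> e k = 1 - 1/(real l + 1)" using F(1)[OF A(1) A(1)] by simp
              have ki: "e k \<bullet> e i = - 1/(real l + 1)" using F(1)[OF A(1) i(1)] False by simp
              show ?thesis by (simp add: inner_diff_right kk ki right_diff_distrib)
            qed
            then show ?thesis unfolding xk by (simp add: algebra_simps)
          qed
          finally have "refl_vec (e k - e i) x = v" using i by simp
          moreover have "refl_vec (e k - e i) x \<in> S" using su(1,2) rootsA A(1) i False by blast
          ultimately show ?thesis by simp
        qed
      qed
    qed
    then show ?thesis using c0 by blast
  qed
qed


theorem mainTheorem4:
  fixes \<Phi> S :: "'a::euclidean_space set"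
  assumes root: "root_system \<Phi>"
    and nontriv: "\<Phi> \<noteq> {}"
    and orbit: "weyl_orbit \<Phi> S"
    and gen: "span S = UNIV"
    and no4: "\<not> (\<exists>l1\<in>S. \<exists>l2\<in>S. \<exists>l3\<in>S. \<exists>l4\<in>S.
                  distinct [l1, l2, l3, l4] \<and> l1 + l2 = l3 + l4)"
  shows "(\<exists>l\<ge>1. type_A l \<Phi>) \<and>
         (\<forall>l e. l \<ge> 1 \<and> isometric_quotient_basis l e \<and> \<Phi> = A_roots l e \<and>
                (l \<noteq> 2 \<or>
                 \<not> (\<exists>l1\<in>S. \<exists>l2\<in>S. \<exists>l3\<in>S. \<exists>l4\<in>S. \<exists>l5\<in>S. \<exists>l6\<in>S.
                      distinct [l1, l2, l3, l4, l5, l6] \<and> l1 + l2 + l3 = l4 + l5 + l6))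
           \<longrightarrow> (\<exists>c::real. c \<noteq> 0 \<and> S = {c *\<^sub>R e i | i. i \<le> l}))"
proof -
  obtain x where S: "S = (\<lambda>w. w x) ` weyl_group \<Phi>" using orbit unfolding weyl_orbit_def by blast
  have n4: "no4 S" using no4 unfolding no4_def .
  show ?thesis
  proof
    show "\<exists>l\<ge>1. type_A l \<Phi>" by (rule part1[OF root nontriv S gen n4])
    show "\<forall>l e. l \<ge> 1 \<and> isometric_quotient_basis l e \<and> \<Phi> = A_roots l e \<and>
                (l \<noteq> 2 \<or>
                 \<not> (\<exists>l1\<in>S. \<exists>l2\<in>S. \<exists>l3\<in>S. \<exists>l4\<in>S. \<exists>l5\<in>S. \<exists>l6\<in>S.
                      distinct [l1, l2, l3, l4, l5, l6] \<and> l1 + l2 + l3 = l4 + l5 + l6))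
           \<longrightarrow> (\<exists>c::real. c \<noteq> 0 \<and> S = {c *\<^sub>R e i | i. i \<le> l})"
      using part2[OF root nontriv S gen n4] by blast
  qed
qed

end
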